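(* Let $Q=\langle F,V,I,O,G\rangle$ be a QNP and let $\pi$ be a policy for $Q$. Then $\pi$ is a strong cyclic solution for $Q$ if and only if $\pi$ (viewed as a policy on the boolean states) is a strong cyclic policy for the FOND problem $T_D(Q)$.
   Context: A qualitative numerical problem (QNP) is a tuple $Q=\langle F,V,I,O,G\rangle$ where $F$ is a finite set of propositional variables and $V$ a finite set of numerical variables taking non-negative real values. $F$-literals are $p,\neg p$ ($p\in F$); $V$-literals are $X=0$ and $X>0$ ($X\in V$). $I$ and $G$ are consistent sets of $F$- and $V$-literals. Each action $a\in O$ has a precondition $Pre(a)$ (set of $F$- and $V$-literals), propositional effects $\mathit{Eff}(a)$ (consistent set of $F$-literals) and numerical effects $N(a)$ (a set of atoms $Inc(X)$, $Dec(X)$, at most one per variable); if $Dec(X)\in N(a)$ then $X>0\in Pre(a)$. A state $s$ assigns a truth value $s[p]$ to each $p\in F$ and a real $s[X]\ge 0$ to each $X\in V$. Initial states are the states satisfying $I$ under a closed-world assumption ($p$, resp. $X=0$, is false if not in $I$). $a$ is applicable in $s$ if $s$ satisfies $Pre(a)$; goal states satisfy $G$. For applicable $a$, $s'\in F(a,s)$ iff $s'[p]$ is true (false) if $p$ ($\neg p$) is in $\mathit{Eff}(a)$ and $s'[p]=s[p]$ otherwise, $s'[X]>s[X]$ if $Inc(X)\in N(a)$, $s'[X]<s[X]$ if $Dec(X)\in N(a)$, and $s'[X]=s[X]$ otherwise. For $\epsilon>0$, a sequence $s_0,a_0,s_1,\dots$ with $a_i$ applicable in $s_i$ and $s_{i+1}\in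 F(a_i,s_i)$ is an $\epsilon$-sequence if for all $X,i$: $s_{i+1}[X]\neq s_i[X]$ implies $|s_{i+1}[X]-s_i[X]|\ge\epsilon$ or $0=s_{i+1}[X]<s_i[X]<\epsilon$; trajectories of $Q$ are such $\epsilon$-sequences for some $\epsilon>0$. The boolean state $\bar s$ of $s$ is the truth valuation it induces on the atoms $p\in F$ and $X=0$ ($X\in V$). A policy for $Q$ is a partial map $\pi$ from states to actions with $\pi(s)=\pi(s')$ whenever $\bar s=\bar s'$; a $\pi$-trajectory is one with $a_i=\pi(s_i)$. $\pi$ is a strong cyclic solution for $Q$ iff for every $\pi$-trajectory from an initial state $s_0$ to a state $s$ there is a $\pi$-trajectory from $s$ to a goal state. A FOND problem $P=\langle F,I,O,G\rangle$ has propositional variables $F$, a unique initial state given by $I$, goal literals $G$, and actions with preconditions and effects, some nondeterministic of the form $E_1\mid\cdots\mid E_k$ (sets of literals); $F(a,t)$ is the set of successors of $t$ under $a$ obtained by choosing one outcome per nondeterministic effect. A policy is a partial map from states to actions; a $\pi$-trajectory is a sequence $t_0,t_1,\dots$ with $\pi(t_i)$ defined and applicable in $t_i$ and $t_{i+1}\in F(\pi(t_i),t_i)$. $\pi$ is strong cyclic for $P$ iff for every $\pi$-trajectory from the initial state to a state $t$ there is a $\pi$-trajectory from $t$ to a goal state. The direct translation $T_D(Q)$ is the FOND problem over $F\cup\{p_{X=0}:X\in V\}$ obtained by reading $X=0$ as $p_{X=0}$ and $X>0$ as $\neg p_{X=0}$ in $I$, $G$ and preconditions, keeping propositional effects, replacing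 each $Inc(X)$ effect by the deterministic effect $\neg p_{X=0}$ and each $Dec(X)$ effect by the nondeterministic effect $\neg p_{X=0}\mid p_{X=0}$. Its states are the boolean states of $Q$, and a policy $\pi$ for $Q$ is identified with the policy $\bar s\mapsto\pi(s)$ on $T_D(Q)$. *)

theory Defs
  imports Complex_Main
begin

(* F = UNIV :: 'f set and V = UNIV :: 'v set, with 'f, 'v finite types *)

datatype ('f, 'v) lit = FLit 'f bool | VZero 'v | VPos 'v
  (* FLit p True = p, FLit p False = \<not>p, VZero X = (X=0), VPos X = (X>0) *)

datatype numeff = Inc | Dec

record ('f, 'v, 'a) qnp =
  qI   :: "('f, 'v) lit set"
  qO   :: "'a set"
  qG   :: "('f, 'v) lit set"
  qPre :: "'a \<Rightarrow> ('f, 'v) lit set"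
  qEff :: "'a \<Rightarrow> ('f \<times> bool) set"
  qN   :: "'a \<Rightarrow> 'v \<Rightarrow> numeff option"   (* at most one numerical effect per variable *)

definition lits_consistent :: "('f, 'v) lit set \<Rightarrow> bool" where
  "lits_consistent L \<longleftrightarrow>
     (\<forall>p. \<not> (FLit p True \<in> L \<and> FLit p False \<in> L)) \<and> (\<forall>X. \<not> (VZero X \<in> L \<and> VPos X \<in> L))"

definition flits_consistent :: "('f \<times> bool) set \<Rightarrow> bool" where
  "flits_consistent E \<longleftrightarrow> (\<forall>p. \<not> ((p, True) \<in> E \<and> (p, False) \<in> E))"

definition qnp_wf :: "('f, 'v, 'a) qnp \<Rightarrow> bool" where
  "qnp_wf Q \<longleftrightarrow> lits_consistent (qI Q) \<and> lits_consistent (qG Q)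
     \<and> (\<forall>a \<in> qO Q. flits_consistent (qEff Q a))
     \<and> (\<forall>a \<in> qO Q. \<forall>X. qN Q a X = Some Dec \<longrightarrow> VPos X \<in> qPre Q a)"

type_synonym ('f, 'v) qstate = "('f \<Rightarrow> bool) \<times> ('v \<Rightarrow> real)"

definition valid_state :: "('f, 'v) qstate \<Rightarrow> bool" where
  "valid_state s \<longleftrightarrow> (\<forall>X. snd s X \<ge> 0)"

fun sat_lit :: "('f, 'v) qstate \<Rightarrow> ('f, 'v) lit \<Rightarrow> bool" where
  "sat_lit s (FLit p b) = (fst s p = b)"
| "sat_lit s (VZero X) = (snd s X = 0)"
| "sat_lit s (VPos X) = (snd s X > 0)"

definition sat_lits :: "('f, 'v) qstate \<Rightarrow> ('f, 'v) lit set \<Rightarrow> bool" where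
  "sat_lits s L \<longleftrightarrow> (\<forall>l \<in> L. sat_lit s l)"

(* initial states: satisfy I under the closed-world assumption *)
definition qnp_initial :: "('f, 'v, 'a) qnp \<Rightarrow> ('f, 'v) qstate \<Rightarrow> bool" where
  "qnp_initial Q s \<longleftrightarrow> valid_state s
     \<and> (\<forall>p. fst s p \<longleftrightarrow> FLit p True \<in> qI Q)
     \<and> (\<forall>X. snd s X = 0 \<longleftrightarrow> VZero X \<in> qI Q)"

definition qnp_goal :: "('f, 'v, 'a) qnp \<Rightarrow> ('f, 'v) qstate \<Rightarrow> bool" where
  "qnp_goal Q s \<longleftrightarrow> sat_lits s (qG Q)"

definition qnp_applicable :: "('f, 'v, 'a) qnp \<Rightarrow> 'a \<Rightarrow> ('f, 'v) qstate \<Rightarrow> bool" where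
  "qnp_applicable Q a s \<longleftrightarrow> a \<in> qO Q \<and> sat_lits s (qPre Q a)"

definition qnp_succ :: "('f, 'v, 'a) qnp \<Rightarrow> 'a \<Rightarrow> ('f, 'v) qstate \<Rightarrow> ('f, 'v) qstate \<Rightarrow> bool" where
  "qnp_succ Q a s s' \<longleftrightarrow> valid_state s'
     \<and> (\<forall>p. fst s' p = (if (p, True) \<in> qEff Q a then True
                        else if (p, False) \<in> qEff Q a then False else fst s p))
     \<and> (\<forall>X. (qN Q a X = Some Inc \<longrightarrow> snd s' X > snd s X)
          \<and> (qN Q a X = Some Dec \<longrightarrow> snd s' X < snd s X)
          \<and> (qN Q a X = None \<longrightarrow> snd s' X = snd s X))"

(* finite epsilon-sequences s_0, a_0, s_1, ..., s_n  (ss = [s_0..s_n], as = [a_0..a_{n-1}]) *)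
definition eps_seq :: "('f, 'v, 'a) qnp \<Rightarrow> real \<Rightarrow> ('f, 'v) qstate list \<Rightarrow> 'a list \<Rightarrow> bool" where
  "eps_seq Q \<epsilon> ss as \<longleftrightarrow> ss \<noteq> [] \<and> length ss = Suc (length as) \<and> valid_state (ss ! 0)
     \<and> (\<forall>i < length as. qnp_applicable Q (as ! i) (ss ! i)
           \<and> qnp_succ Q (as ! i) (ss ! i) (ss ! Suc i)
           \<and> (\<forall>X. snd (ss ! Suc i) X \<noteq> snd (ss ! i) X \<longrightarrow>
                  \<bar>snd (ss ! Suc i) X - snd (ss ! i) X\<bar> \<ge> \<epsilon>
                  \<or> (0 = snd (ss ! Suc i) X \<and> snd (ss ! Suc i) X < snd (ss ! i) X
                      \<and> snd (ss ! i) X < \<epsilon>)))"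

definition qnp_trajectory :: "('f, 'v, 'a) qnp \<Rightarrow> ('f, 'v) qstate list \<Rightarrow> 'a list \<Rightarrow> bool" where
  "qnp_trajectory Q ss as \<longleftrightarrow> (\<exists>\<epsilon> > 0. eps_seq Q \<epsilon> ss as)"

type_synonym ('f, 'v) bstate = "'f + 'v \<Rightarrow> bool"

definition bstate :: "('f, 'v) qstate \<Rightarrow> ('f, 'v) bstate" where
  "bstate s = (\<lambda>x. case x of Inl p \<Rightarrow> fst s p | Inr X \<Rightarrow> snd s X = 0)"

definition qnp_policy :: "('f, 'v, 'a) qnp \<Rightarrow> (('f, 'v) qstate \<Rightarrow> 'a option) \<Rightarrow> bool" where
  "qnp_policy Q \<pi> \<longleftrightarrow> (\<forall>s s'. valid_state s \<and> valid_state s' \<and> bstate s = bstate s' \<longrightarrow> \<pi> s = \<pi> s')"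

definition qnp_pi_trajectory ::
  "('f, 'v, 'a) qnp \<Rightarrow> (('f, 'v) qstate \<Rightarrow> 'a option) \<Rightarrow> ('f, 'v) qstate list \<Rightarrow> bool" where
  "qnp_pi_trajectory Q \<pi> ss \<longleftrightarrow>
     (\<exists>as. qnp_trajectory Q ss as \<and> (\<forall>i < length as. \<pi> (ss ! i) = Some (as ! i)))"

definition qnp_strong_cyclic :: "('f, 'v, 'a) qnp \<Rightarrow> (('f, 'v) qstate \<Rightarrow> 'a option) \<Rightarrow> bool" where
  "qnp_strong_cyclic Q \<pi> \<longleftrightarrow>
     (\<forall>ss. qnp_pi_trajectory Q \<pi> ss \<and> qnp_initial Q (hd ss) \<longrightarrow>
        (\<exists>ss'. qnp_pi_trajectory Q \<pi> ss' \<and> hd ss' = last ss \<and> qnp_goal Q (last ss')))"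

record ('p, 'a) fond =
  fI   :: "('p \<times> bool) set"
  fO   :: "'a set"
  fG   :: "('p \<times> bool) set"
  fPre :: "'a \<Rightarrow> ('p \<times> bool) set"
  fEff :: "'a \<Rightarrow> ('p \<times> bool) set set set"
    (* each element is one (possibly nondeterministic) effect E_1 | ... | E_k,
       given as the set of its outcomes {E_1, ..., E_k}; deterministic effects are singletons *)

definition fsat :: "('p \<Rightarrow> bool) \<Rightarrow> ('p \<times> bool) set \<Rightarrow> bool" where
  "fsat t L \<longleftrightarrow> (\<forall>(p, b) \<in> L. t p = b)"

definition fond_init :: "('p, 'a) fond \<Rightarrow> 'p \<Rightarrow> bool" where
  "fond_init P = (\<lambda>p. (p, True) \<in> fI P)"

definition fond_goal :: "('p, 'a) fond \<Rightarrow> ('p \<Rightarrow> bool) \<Rightarrow> bool" where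
  "fond_goal P t \<longleftrightarrow> fsat t (fG P)"

definition apply_lits :: "('p \<times> bool) set \<Rightarrow> ('p \<Rightarrow> bool) \<Rightarrow> 'p \<Rightarrow> bool" where
  "apply_lits E t = (\<lambda>p. if (p, True) \<in> E then True else if (p, False) \<in> E then False else t p)"

definition fond_succ :: "('p, 'a) fond \<Rightarrow> 'a \<Rightarrow> ('p \<Rightarrow> bool) \<Rightarrow> ('p \<Rightarrow> bool) \<Rightarrow> bool" where
  "fond_succ P a t t' \<longleftrightarrow>
     (\<exists>ch. (\<forall>E \<in> fEff P a. ch E \<in> E) \<and> t' = apply_lits (\<Union> (ch ` fEff P a)) t)"

definition fond_pi_trajectory ::
  "('p, 'a) fond \<Rightarrow> (('p \<Rightarrow> bool) \<Rightarrow> 'a option) \<Rightarrow> ('p \<Rightarrow> bool) list \<Rightarrow> bool" where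
  "fond_pi_trajectory P \<pi> ts \<longleftrightarrow> ts \<noteq> [] \<and>
     (\<forall>i. Suc i < length ts \<longrightarrow> (\<exists>a. \<pi> (ts ! i) = Some a \<and> a \<in> fO P
          \<and> fsat (ts ! i) (fPre P a) \<and> fond_succ P a (ts ! i) (ts ! Suc i)))"

definition fond_strong_cyclic :: "('p, 'a) fond \<Rightarrow> (('p \<Rightarrow> bool) \<Rightarrow> 'a option) \<Rightarrow> bool" where
  "fond_strong_cyclic P \<pi> \<longleftrightarrow>
     (\<forall>ts. fond_pi_trajectory P \<pi> ts \<and> hd ts = fond_init P \<longrightarrow>
        (\<exists>ts'. fond_pi_trajectory P \<pi> ts' \<and> hd ts' = last ts \<and> fond_goal P (last ts')))"

(* Direct translation T_D(Q): variables F \<union> {p_(X=0)} = 'f + 'v        *)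

fun tr_lit :: "('f, 'v) lit \<Rightarrow> ('f + 'v) \<times> bool" where
  "tr_lit (FLit p b) = (Inl p, b)"
| "tr_lit (VZero X) = (Inr X, True)"
| "tr_lit (VPos X) = (Inr X, False)"

definition tr_eff :: "('f, 'v, 'a) qnp \<Rightarrow> 'a \<Rightarrow> (('f + 'v) \<times> bool) set set set" where
  "tr_eff Q a =
     {{(\<lambda>(p, b). (Inl p, b)) ` qEff Q a}}
     \<union> {{{(Inr X, False)}} | X. qN Q a X = Some Inc}
     \<union> {{{(Inr X, False)}, {(Inr X, True)}} | X. qN Q a X = Some Dec}"

definition T_D :: "('f, 'v, 'a) qnp \<Rightarrow> ('f + 'v, 'a) fond" where
  "T_D Q = \<lparr> fI = tr_lit ` qI Q, fO = qO Q, fG = tr_lit ` qG Q,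
             fPre = (\<lambda>a. tr_lit ` qPre Q a), fEff = tr_eff Q \<rparr>"

definition bool_policy ::
  "(('f, 'v) qstate \<Rightarrow> 'a option) \<Rightarrow> (('f, 'v) bstate \<Rightarrow> 'a option)" where
  "bool_policy \<pi> t = \<pi> (SOME s. valid_state s \<and> bstate s = t)"

end

theory Submission
  imports Defs
begin


lemma fsat_tr:
  assumes "valid_state s"
  shows "fsat (bstate s) (tr_lit ` L) \<longleftrightarrow> sat_lits s L"
proof -
  have "fsat (bstate s) {tr_lit l} \<longleftrightarrow> sat_lit s l" for l
    using assms by (cases l) (auto simp: fsat_def bstate_def valid_state_def order_le_less)
  thus ?thesis by (auto simp: fsat_def sat_lits_def)
qed

lemma goal_tr: "valid_state s \<Longrightarrow> fond_goal (T_D Q) (bstate s) \<longleftrightarrow> qnp_goal Q s"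
  by (simp add: fond_goal_def qnp_goal_def T_D_def fsat_tr)

lemma tr_lit_Inl: "tr_lit l = (Inl p, b) \<longleftrightarrow> l = FLit p b"
  by (cases l) auto
lemma tr_lit_Inr: "tr_lit l = (Inr X, b) \<longleftrightarrow> (l = VZero X \<and> b) \<or> (l = VPos X \<and> \<not> b)"
  by (cases l) auto
lemma tr_lit_Inl': "(Inl p, b) = tr_lit l \<longleftrightarrow> l = FLit p b"
  by (cases l) auto
lemma tr_lit_Inr': "(Inr X, b) = tr_lit l \<longleftrightarrow> (l = VZero X \<and> b) \<or> (l = VPos X \<and> \<not> b)"
  by (cases l) auto

lemma init_tr: "qnp_initial Q s \<Longrightarrow> bstate s = fond_init (T_D Q)"
proof
  fix x assume a: "qnp_initial Q s"
  show "bstate s x = fond_init (T_D Q) x"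
  proof (cases x)
    case (Inl p)
    have "(Inl p, True) \<in> tr_lit ` qI Q \<longleftrightarrow> FLit p True \<in> qI Q"
      by (auto simp: image_iff tr_lit_Inl')
    with a Inl show ?thesis by (auto simp: bstate_def fond_init_def T_D_def qnp_initial_def)
  next
    case (Inr X)
    have "(Inr X, True) \<in> tr_lit ` qI Q \<longleftrightarrow> VZero X \<in> qI Q"
      by (auto simp: image_iff tr_lit_Inr')
    with a Inr show ?thesis by (auto simp: bstate_def fond_init_def T_D_def qnp_initial_def)
  qed
qed

lemma init_ex: "\<exists>s. qnp_initial Q s"
  by (rule exI[of _ "(\<lambda>p. FLit p True \<in> qI Q, \<lambda>X. if VZero X \<in> qI Q then 0 else 1)"])
     (auto simp: qnp_initial_def valid_state_def)

lemma policy_tr: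
  assumes "qnp_policy Q \<pi>" "valid_state s"
  shows "bool_policy \<pi> (bstate s) = \<pi> s"
proof -
  let ?s = "SOME s'. valid_state s' \<and> bstate s' = bstate s"
  have "valid_state ?s \<and> bstate ?s = bstate s" by (rule someI[of _ s]) (use assms in auto)
  thus ?thesis using assms unfolding bool_policy_def qnp_policy_def by metis
qed



definition decset :: "'v \<Rightarrow> (('f + 'v) \<times> bool) set set" where
  "decset X = {{(Inr X, False)}, {(Inr X, True)}}"

lemma decset_inj: "decset X = decset Y \<Longrightarrow> X = Y"
  by (auto simp: decset_def doubleton_eq_iff)

lemma tr_eff_cases:
  "E \<in> tr_eff Q a \<longleftrightarrow> E = {(\<lambda>(p, b). (Inl p, b)) ` qEff Q a}
     \<or> (\<exists>X. qN Q a X = Some Inc \<and> E = {{(Inr X, False)}})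
     \<or> (\<exists>X. qN Q a X = Some Dec \<and> E = decset X)"
  by (auto simp: tr_eff_def decset_def)

lemma succ_proj:
  fixes Q :: "('f, 'v, 'a) qnp"
  assumes wf: "qnp_wf Q" and aO: "a \<in> qO Q" and vs: "valid_state s" and su: "qnp_succ Q a s s'"
  shows "fond_succ (T_D Q) a (bstate s) (bstate s')"
proof -
  define ch where "ch E = (if \<exists>X. E = decset X
      then {(Inr (SOME X. E = decset X), snd s' (SOME X. E = decset X) = 0)} else the_elem E)"
    for E :: "(('f + 'v) \<times> bool) set set"
  have chD: "ch (decset X) = {(Inr X, snd s' X = 0)}" for X
  proof -
    have "(SOME Y. decset X = decset Y) = X"
      by (rule some_equality) (auto dest: decset_inj)
    thus ?thesis by (auto simp: ch_def)
  qed
  have nd1: "{e} \<noteq> decset X" for e X by (auto simp: decset_def doubleton_eq_iff)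
  have chS: "ch {e} = e" for e
  proof -
    have "\<not> (\<exists>X. {e} = decset X)" by (simp add: nd1[of e])
    thus ?thesis by (simp add: ch_def)
  qed
  have mem: "\<forall>E \<in> fEff (T_D Q) a. ch E \<in> E"
  proof
    fix E assume "E \<in> fEff (T_D Q) a"
    hence "E \<in> tr_eff Q a" by (simp add: T_D_def)
    thus "ch E \<in> E" unfolding tr_eff_cases
    proof (elim disjE exE conjE)
      fix X assume "E = decset X" thus ?thesis by (simp add: chD, simp add: decset_def)
    qed (simp_all add: chS)
  qed
  define U where "U = \<Union> (ch ` fEff (T_D Q) a)"
  have tr: "fEff (T_D Q) a = {{(\<lambda>(p, b). (Inl p, b)) ` qEff Q a}}
     \<union> (\<lambda>X. {{(Inr X, False)}}) ` {X. qN Q a X = Some Inc} \<union> decset ` {X. qN Q a X = Some Dec}"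
    by (auto simp: T_D_def tr_eff_def decset_def)
  have U2: "U = (\<lambda>(p, b). (Inl p, b)) ` qEff Q a \<union> (\<lambda>X. (Inr X, False)) ` {X. qN Q a X = Some Inc}
     \<union> (\<lambda>X. (Inr X, snd s' X = 0)) ` {X. qN Q a X = Some Dec}"
    unfolding U_def tr image_Un Union_Un_distrib by (auto simp: chS chD)
  have UL: "(Inl p, b) \<in> U \<longleftrightarrow> (p, b) \<in> qEff Q a" for p b
    unfolding U2 by auto
  have UR: "(Inr X, b) \<in> U \<longleftrightarrow> (qN Q a X = Some Inc \<and> \<not> b) \<or> (qN Q a X = Some Dec \<and> b = (snd s' X = 0))" for X b
    unfolding U2 by auto
  have sP: "fst s' p = (if (p, True) \<in> qEff Q a then True
                        else if (p, False) \<in> qEff Q a then False else fst s p)" for p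
    using su by (simp add: qnp_succ_def)
  have sX: "(qN Q a X = Some Inc \<longrightarrow> snd s' X > snd s X)
          \<and> (qN Q a X = Some Dec \<longrightarrow> snd s' X < snd s X)
          \<and> (qN Q a X = None \<longrightarrow> snd s' X = snd s X)" for X
    using su by (simp add: qnp_succ_def)
  have AL: "apply_lits U (bstate s) = bstate s'"
  proof
    fix x show "apply_lits U (bstate s) x = bstate s' x"
    proof (cases x)
      case (Inl p)
      then show ?thesis using sP[of p]
        by (auto simp: apply_lits_def UL UR bstate_def)
    next
      case (Inr X)
      have v: "snd s X \<ge> 0" "snd s' X \<ge> 0" using vs su by (auto simp: valid_state_def qnp_succ_def)
      show ?thesis
      proof (cases "qN Q a X")
        case None
        then show ?thesis using sX[of X] Inr by (auto simp: apply_lits_def UL UR bstate_def)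
      next
        case (Some e)
        then show ?thesis using sX[of X] Inr v by (cases e) (auto simp: apply_lits_def UL UR bstate_def)
      qed
    qed
  qed
  show ?thesis unfolding fond_succ_def
    by (rule exI[of _ ch]) (use mem AL in \<open>simp add: U_def\<close>)
qed



lemma tr_eq:
  fixes Q :: "('f, 'v, 'a) qnp"
  shows "fEff (T_D Q) a = {{(\<lambda>(p, b). (Inl p, b)) ` qEff Q a}}
     \<union> (\<lambda>X. {{(Inr X, False)}}) ` {X. qN Q a X = Some Inc} \<union> decset ` {X. qN Q a X = Some Dec}"
  by (auto simp: T_D_def tr_eff_def decset_def)

lemma succ_char:
  fixes Q :: "('f, 'v, 'a) qnp"
  assumes fs: "fond_succ (T_D Q) a t t'"
  shows "t' (Inl p) = (if (p, True) \<in> qEff Q a then True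
                        else if (p, False) \<in> qEff Q a then False else t (Inl p))"
    and "qN Q a X = Some Inc \<Longrightarrow> \<not> t' (Inr X)"
    and "qN Q a X = None \<Longrightarrow> t' (Inr X) = t (Inr X)"
proof -
  obtain ch where mem: "\<forall>E \<in> fEff (T_D Q) a. ch E \<in> E"
    and t': "t' = apply_lits (\<Union> (ch ` fEff (T_D Q) a)) t"
    using fs unfolding fond_succ_def by blast
  define U where "U = \<Union> (ch ` fEff (T_D Q) a)"
  have c0: "ch {(\<lambda>(p, b). (Inl p, b)) ` qEff Q a} = (\<lambda>(p, b). (Inl p, b)) ` qEff Q a"
    using mem by (simp add: tr_eq)
  have c1: "ch {{(Inr X, False)}} = {(Inr X, False)}" if "qN Q a X = Some Inc" for X
  proof -
    have "{{(Inr X, False)}} \<in> fEff (T_D Q) a" using that by (simp add: tr_eq)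
    thus ?thesis using mem by fastforce
  qed
  have c2: "ch (decset X) \<subseteq> {(Inr X, False), (Inr X, True)}" if "qN Q a X = Some Dec" for X
  proof -
    have "decset X \<in> fEff (T_D Q) a" using that by (simp add: tr_eq)
    hence "ch (decset X) \<in> decset X" using mem by blast
    thus ?thesis by (auto simp: decset_def)
  qed
  have U2: "U = (\<lambda>(p, b). (Inl p, b)) ` qEff Q a \<union> (\<lambda>X. (Inr X, False)) ` {X. qN Q a X = Some Inc}
     \<union> (\<Union>X \<in> {X. qN Q a X = Some Dec}. ch (decset X))"
    unfolding U_def tr_eq image_Un Union_Un_distrib using c0 c1
    by (simp add: image_image) (auto simp: image_iff)
  have UL: "(Inl p, b) \<in> U \<longleftrightarrow> (p, b) \<in> qEff Q a" for p b
  proof -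
    have "(Inl p, b) \<notin> ch (decset X)" if "qN Q a X = Some Dec" for X
      using c2[OF that] by auto
    thus ?thesis unfolding U2 by auto
  qed
  have uniq: "(Inr X, b) \<in> ch (decset Y) \<Longrightarrow> qN Q a Y = Some Dec \<Longrightarrow> Y = X" for Y b
    using c2 by auto
  have UR1: "(Inr X, b) \<in> U \<Longrightarrow> qN Q a X \<noteq> None" for b
    unfolding U2 using uniq by fastforce
  have UR2: "(Inr X, True) \<in> U \<Longrightarrow> qN Q a X \<noteq> Some Inc"
    unfolding U2 using uniq by fastforce
  have UR3: "qN Q a X = Some Inc \<Longrightarrow> (Inr X, False) \<in> U"
    unfolding U2 by fastforce
  show "t' (Inl p) = (if (p, True) \<in> qEff Q a then True
                        else if (p, False) \<in> qEff Q a then False else t (Inl p))"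
    unfolding t' U_def[symmetric] by (simp add: apply_lits_def UL)
  show "qN Q a X = Some Inc \<Longrightarrow> \<not> t' (Inr X)"
    unfolding t' U_def[symmetric] using UR2 UR3 by (auto simp: apply_lits_def)
  show "qN Q a X = None \<Longrightarrow> t' (Inr X) = t (Inr X)"
    unfolding t' U_def[symmetric] using UR1[of True] UR1[of False] by (auto simp: apply_lits_def)
qed



lemma traj_valid:
  assumes "eps_seq Q e ss as" "i < length ss"
  shows "valid_state (ss ! i)"
  using assms(2)
proof (induction i)
  case 0 then show ?case using assms(1) by (simp add: eps_seq_def)
next
  case (Suc i)
  then show ?case using assms(1) by (auto simp: eps_seq_def qnp_succ_def)
qed

lemma proj:
  fixes Q :: "('f, 'v, 'a) qnp"
  assumes wf: "qnp_wf Q" and pol: "qnp_policy Q \<pi>" and tr: "qnp_pi_trajectory Q \<pi> ss"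
  shows "fond_pi_trajectory (T_D Q) (bool_policy \<pi>) (map bstate ss)"
    and "\<forall>i < length ss. valid_state (ss ! i)"
proof -
  obtain as e where es: "eps_seq Q e ss as" and pa: "\<forall>i < length as. \<pi> (ss ! i) = Some (as ! i)"
    using tr unfolding qnp_pi_trajectory_def qnp_trajectory_def by blast
  show V: "\<forall>i < length ss. valid_state (ss ! i)" using traj_valid[OF es] by blast
  have len: "length ss = Suc (length as)" "ss \<noteq> []" using es by (auto simp: eps_seq_def)
  show "fond_pi_trajectory (T_D Q) (bool_policy \<pi>) (map bstate ss)"
    unfolding fond_pi_trajectory_def
  proof (intro conjI allI impI)
    show "map bstate ss \<noteq> []" using len by simp
    fix i assume i: "Suc i < length (map bstate ss)"
    hence il: "i < length as" using len by simp
    have vi: "valid_state (ss ! i)" using V i by simp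
    have st: "qnp_applicable Q (as ! i) (ss ! i)" "qnp_succ Q (as ! i) (ss ! i) (ss ! Suc i)"
      using es il by (auto simp: eps_seq_def)
    have aO: "as ! i \<in> qO Q" using st by (simp add: qnp_applicable_def)
    show "\<exists>a. bool_policy \<pi> (map bstate ss ! i) = Some a \<and> a \<in> fO (T_D Q) \<and>
             fsat (map bstate ss ! i) (fPre (T_D Q) a) \<and>
             fond_succ (T_D Q) a (map bstate ss ! i) (map bstate ss ! Suc i)"
    proof (intro exI conjI)
      show "bool_policy \<pi> (map bstate ss ! i) = Some (as ! i)"
        using i policy_tr[OF pol vi] pa il by simp
      show "as ! i \<in> fO (T_D Q)" using aO by (simp add: T_D_def)
      show "fsat (map bstate ss ! i) (fPre (T_D Q) (as ! i))"
        using i st vi by (simp add: T_D_def fsat_tr qnp_applicable_def)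
      show "fond_succ (T_D Q) (as ! i) (map bstate ss ! i) (map bstate ss ! Suc i)"
        using i succ_proj[OF wf aO vi st(2)] by simp
    qed
  qed
qed



primrec lv :: "('v \<Rightarrow> real) \<Rightarrow> real \<Rightarrow> real \<Rightarrow> (nat \<Rightarrow> 'a) \<Rightarrow> (nat \<Rightarrow> ('f, 'v) bstate)
    \<Rightarrow> ('f, 'v, 'a) qnp \<Rightarrow> nat \<Rightarrow> 'v \<Rightarrow> real" where
  "lv v0 c K act ts Q 0 = v0"
| "lv v0 c K act ts Q (Suc i) = (\<lambda>X. if ts (Suc i) (Inr X) then 0 else
      (case qN Q (act i) X of Some Inc \<Rightarrow> lv v0 c K act ts Q i X + K
        | Some Dec \<Rightarrow> lv v0 c K act ts Q i X - c | None \<Rightarrow> lv v0 c K act ts Q i X))"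

lemma lift:
  fixes Q :: "('f::finite, 'v::finite, 'a) qnp"
  assumes wf: "qnp_wf Q" and pol: "qnp_policy Q \<pi>" and v0: "valid_state s0"
    and ft: "fond_pi_trajectory (T_D Q) (bool_policy \<pi>) ts" and h: "hd ts = bstate s0"
  shows "\<exists>ss. qnp_pi_trajectory Q \<pi> ss \<and> hd ss = s0 \<and> map bstate ss = ts"
proof -
  define N where "N = length ts"
  have N1: "N \<ge> 1" using ft by (cases ts) (auto simp: N_def fond_pi_trajectory_def)
  define m where "m = Min (insert 1 (snd s0 ` {X. snd s0 X > 0}))"
  have mpos: "m > 0" unfolding m_def by (subst Min_gr_iff) auto
  have mle: "snd s0 X > 0 \<Longrightarrow> m \<le> snd s0 X" for X unfolding m_def by (rule Min_le) auto
  define c where "c = m / real N"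
  have cpos: "c > 0" using mpos N1 by (simp add: c_def)
  have cN: "c * real N = m" using N1 by (simp add: c_def)
  define act where "act i = the (bool_policy \<pi> (ts ! i))" for i
  have step: "bool_policy \<pi> (ts ! i) = Some (act i) \<and> act i \<in> qO Q
      \<and> fsat (ts ! i) (tr_lit ` qPre Q (act i)) \<and> fond_succ (T_D Q) (act i) (ts ! i) (ts ! Suc i)"
    if "Suc i < N" for i
    using ft that unfolding fond_pi_trajectory_def N_def act_def by (fastforce simp: T_D_def)
  define v where "v = lv (snd s0) c (c * real N) act (\<lambda>i. ts ! i) Q"
  have v0': "v 0 = snd s0" by (simp add: v_def)
  have vS: "v (Suc i) X = (if (ts ! Suc i) (Inr X) then 0 else
      (case qN Q (act i) X of Some Inc \<Rightarrow> v i X + c * real N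
        | Some Dec \<Rightarrow> v i X - c | None \<Rightarrow> v i X))" for i X
    unfolding v_def by simp
  have ts0: "ts ! 0 = bstate s0" using h ft by (cases ts) (auto simp: fond_pi_trajectory_def)
  have inv: "\<forall>X. v i X \<ge> 0 \<and> (v i X = 0 \<longleftrightarrow> (ts ! i) (Inr X)) \<and> (v i X > 0 \<longrightarrow> v i X \<ge> c * (real N - real i))"
    if "i < N" for i
    using that
  proof (induction i)
    case 0
    show ?case using v0 mle cN by (auto simp: v0' ts0 bstate_def valid_state_def)
  next
    case (Suc i)
    have IH: "v i X \<ge> 0" "v i X = 0 \<longleftrightarrow> (ts ! i) (Inr X)" "v i X > 0 \<longrightarrow> v i X \<ge> c * (real N - real i)" for X
      using Suc by auto
    have st: "bool_policy \<pi> (ts ! i) = Some (act i) \<and> act i \<in> qO Q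
      \<and> fsat (ts ! i) (tr_lit ` qPre Q (act i)) \<and> fond_succ (T_D Q) (act i) (ts ! i) (ts ! Suc i)"
      using step Suc.prems by blast
    show ?case
    proof
      fix X
      show "v (Suc i) X \<ge> 0 \<and> (v (Suc i) X = 0 \<longleftrightarrow> (ts ! Suc i) (Inr X)) \<and>
         (v (Suc i) X > 0 \<longrightarrow> v (Suc i) X \<ge> c * (real N - real (Suc i)))"
      proof (cases "(ts ! Suc i) (Inr X)")
        case True then show ?thesis by (simp add: vS)
      next
        case False
        have Ni: "real N - real (Suc i) \<ge> 1" using Suc.prems by linarith
        show ?thesis
        proof (cases "qN Q (act i) X")
          case None
          have "(ts ! Suc i) (Inr X) = (ts ! i) (Inr X)" using succ_char(3)[of Q "act i"] st None by blast
          hence "v i X > 0" using IH[of X] False by auto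
          moreover have "c * (real N - real (Suc i)) \<le> c * (real N - real i)"
            using cpos by (intro mult_left_mono) auto
          ultimately show ?thesis using False None IH[of X]
            by (simp add: vS)
        next
          case (Some e)
          show ?thesis
          proof (cases e)
            case Inc
            have "c * (real N - real (Suc i)) \<le> c * real N" using cpos by simp
            moreover have "c * real N > 0" using cpos N1 by simp
            ultimately show ?thesis using False Some Inc IH[of X]
              by (simp add: vS)
          next
            case Dec
            have "VPos X \<in> qPre Q (act i)" using wf st Some Dec by (auto simp: qnp_wf_def)
            hence "(Inr X, False) \<in> tr_lit ` qPre Q (act i)" by force
            hence "\<not> (ts ! i) (Inr X)" using st by (auto simp: fsat_def)
            hence "v i X > 0" "v i X \<ge> c * (real N - real i)" using IH[of X] by auto
            moreover have "c * (real N - real i) - c \<ge> c * 1" 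
            proof -
              have "c * (real N - real i) - c = c * (real N - real (Suc i))" by (simp add: algebra_simps)
              also have "\<dots> \<ge> c * 1" using cpos Ni by (intro mult_left_mono) auto
              finally show ?thesis .
            qed
            ultimately show ?thesis using False Some Dec cpos
              by (simp add: vS ring_distribs)
          qed
        qed
      qed
    qed
  qed
  have decpos: "v i X > 0" if "Suc i < N" "qN Q (act i) X = Some Dec" for i X
  proof -
    have st: "act i \<in> qO Q \<and> fsat (ts ! i) (tr_lit ` qPre Q (act i))" using step that(1) by blast
    have "VPos X \<in> qPre Q (act i)" using wf st that(2) by (auto simp: qnp_wf_def)
    hence "(Inr X, False) \<in> tr_lit ` qPre Q (act i)" by force
    hence "\<not> (ts ! i) (Inr X)" using st by (auto simp: fsat_def)
    moreover have "i < N" using that(1) by simp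
    ultimately show ?thesis using inv[of i] by (metis order_le_less)
  qed
  have numX: "(qN Q (act i) X = Some Inc \<longrightarrow> v (Suc i) X > v i X)
      \<and> (qN Q (act i) X = Some Dec \<longrightarrow> v (Suc i) X < v i X)
      \<and> (qN Q (act i) X = None \<longrightarrow> v (Suc i) X = v i X)
      \<and> (v (Suc i) X \<noteq> v i X \<longrightarrow> \<bar>v (Suc i) X - v i X\<bar> \<ge> c
            \<or> (0 = v (Suc i) X \<and> v (Suc i) X < v i X \<and> v i X < c))"
    if si: "Suc i < N" for i X
  proof -
    have fs: "fond_succ (T_D Q) (act i) (ts ! i) (ts ! Suc i)" using step si by blast
    have iN: "i < N" using si by simp
    have I0: "v i X \<ge> 0" "v i X = 0 \<longleftrightarrow> (ts ! i) (Inr X)" using inv[OF iN] by blast+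
    have I1: "v (Suc i) X \<ge> 0" "v (Suc i) X = 0 \<longleftrightarrow> (ts ! Suc i) (Inr X)" using inv[OF si] by blast+
    have cle: "c \<le> c * real N" using cpos N1 by simp
    show ?thesis
    proof (cases "qN Q (act i) X")
      case None
      have "(ts ! Suc i) (Inr X) = (ts ! i) (Inr X)" using succ_char(3)[OF fs] None by blast
      hence "v (Suc i) X = v i X" using I0 I1 None by (cases "(ts ! i) (Inr X)") (auto simp: vS)
      then show ?thesis using None by simp
    next
      case (Some e)
      show ?thesis
      proof (cases e)
        case Inc
        have "\<not> (ts ! Suc i) (Inr X)" using succ_char(2)[OF fs] Some Inc by blast
        hence "v (Suc i) X = v i X + c * real N" using Some Inc by (simp add: vS)
        then show ?thesis using Some Inc cle cpos by auto
      next
        case Dec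
        have p: "v i X > 0" using decpos si Some Dec by blast
        show ?thesis
        proof (cases "(ts ! Suc i) (Inr X)")
          case True
          hence "v (Suc i) X = 0" by (simp add: vS)
          then show ?thesis using Some Dec p by auto
        next
          case False
          hence "v (Suc i) X = v i X - c" using Some Dec by (simp add: vS)
          then show ?thesis using Some Dec cpos by auto
        qed
      qed
    qed
  qed
  define ss where "ss = map (\<lambda>i. (\<lambda>p. (ts ! i) (Inl p), v i)) [0..<N]"
  define as where "as = map act [0..<N - 1]"
  have lss: "length ss = N" "length as = N - 1" by (auto simp: ss_def as_def)
  have ssi: "ss ! i = (\<lambda>p. (ts ! i) (Inl p), v i)" if "i < N" for i
    using that by (simp add: ss_def)
  have asi: "as ! i = act i" if "i < N - 1" for i using that by (simp add: as_def)
  have bs: "bstate (ss ! i) = ts ! i" if "i < N" for i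
  proof
    fix x show "bstate (ss ! i) x = (ts ! i) x"
    proof (cases x)
      case (Inl p) then show ?thesis by (simp add: bstate_def ssi[OF that])
    next
      case (Inr X)
      have "v i X = 0 \<longleftrightarrow> (ts ! i) (Inr X)" using inv[OF that] by blast
      then show ?thesis using Inr by (simp add: bstate_def ssi[OF that])
    qed
  qed
  have vs: "valid_state (ss ! i)" if "i < N" for i
  proof -
    have "\<forall>X. v i X \<ge> 0" using inv[OF that] by blast
    thus ?thesis by (simp add: valid_state_def ssi[OF that])
  qed
  have mp: "map bstate ss = ts"
    by (rule nth_equalityI) (auto simp: lss N_def bs)
  have hs: "hd ss = s0"
  proof -
    have "ss ! 0 = s0"
      using ssi[of 0] N1 ts0 v0' by (cases s0) (auto simp: bstate_def)
    moreover have "ss \<noteq> []" using N1 lss by auto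
    ultimately show ?thesis by (simp add: hd_conv_nth)
  qed
  have es: "eps_seq Q c ss as"
    unfolding eps_seq_def
  proof (intro conjI allI impI)
    show "ss \<noteq> []" "length ss = Suc (length as)" "valid_state (ss ! 0)"
      using N1 lss vs[of 0] by auto
    fix i assume "i < length as"
    hence si: "Suc i < N" and i: "i < N" using lss by auto
    have st: "act i \<in> qO Q \<and> fsat (ts ! i) (tr_lit ` qPre Q (act i))
       \<and> fond_succ (T_D Q) (act i) (ts ! i) (ts ! Suc i)" using step si by blast
    have ai: "as ! i = act i" using asi si by simp
    show "qnp_applicable Q (as ! i) (ss ! i)"
      using st bs[OF i] fsat_tr[OF vs[OF i]] by (simp add: ai qnp_applicable_def)
    show "qnp_succ Q (as ! i) (ss ! i) (ss ! Suc i)"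
      unfolding qnp_succ_def ai
    proof (intro conjI allI)
      show "valid_state (ss ! Suc i)" using vs si by blast
      fix p show "fst (ss ! Suc i) p = (if (p, True) \<in> qEff Q (act i) then True
            else if (p, False) \<in> qEff Q (act i) then False else fst (ss ! i) p)"
        using succ_char(1)[of Q "act i" "ts ! i" "ts ! Suc i" p] st by (simp add: ssi si i)
    next
      fix X
      show "qN Q (act i) X = Some Inc \<longrightarrow> snd (ss ! i) X < snd (ss ! Suc i) X"
        using numX[OF si, of X] by (simp add: ssi si i)
      show "qN Q (act i) X = Some Dec \<longrightarrow> snd (ss ! Suc i) X < snd (ss ! i) X"
        using numX[OF si, of X] by (simp add: ssi si i)
      show "qN Q (act i) X = None \<longrightarrow> snd (ss ! Suc i) X = snd (ss ! i) X"
        using numX[OF si, of X] by (simp add: ssi si i)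
    qed
    fix X assume ne: "snd (ss ! Suc i) X \<noteq> snd (ss ! i) X"
    show "c \<le> \<bar>snd (ss ! Suc i) X - snd (ss ! i) X\<bar> \<or>
          0 = snd (ss ! Suc i) X \<and> snd (ss ! Suc i) X < snd (ss ! i) X \<and> snd (ss ! i) X < c"
      using numX[OF si, of X] ne by (simp add: ssi si i)
  qed
  have pt: "qnp_pi_trajectory Q \<pi> ss"
    unfolding qnp_pi_trajectory_def qnp_trajectory_def
  proof (intro exI conjI allI impI)
    show "c > 0" by (rule cpos)
    show "eps_seq Q c ss as" by (rule es)
    fix i assume "i < length as"
    hence si: "Suc i < N" and i: "i < N" using lss by auto
    have "\<pi> (ss ! i) = bool_policy \<pi> (ts ! i)" using policy_tr[OF pol vs[OF i]] bs[OF i] by simp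
    also have "\<dots> = Some (act i)" using step si by blast
    finally show "\<pi> (ss ! i) = Some (as ! i)" using asi si by simp
  qed
  show ?thesis using pt hs mp by blast
qed



lemma pi_ne: "qnp_pi_trajectory Q \<pi> ss \<Longrightarrow> ss \<noteq> []"
  by (auto simp: qnp_pi_trajectory_def qnp_trajectory_def eps_seq_def)

lemma last_valid:
  assumes "qnp_wf Q" "qnp_policy Q \<pi>" "qnp_pi_trajectory Q \<pi> ss"
  shows "valid_state (last ss)"
proof -
  have "ss \<noteq> []" using pi_ne assms(3) .
  thus ?thesis using proj(2)[OF assms] by (simp add: last_conv_nth)
qed

theorem theorem1:
  fixes Q :: "('f::finite, 'v::finite, 'a) qnp"
    and \<pi> :: "('f, 'v) qstate \<Rightarrow> 'a option"
  assumes "qnp_wf Q"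
    and "qnp_policy Q \<pi>"
  shows "qnp_strong_cyclic Q \<pi> \<longleftrightarrow> fond_strong_cyclic (T_D Q) (bool_policy \<pi>)"
proof
  assume qsc: "qnp_strong_cyclic Q \<pi>"
  show "fond_strong_cyclic (T_D Q) (bool_policy \<pi>)"
    unfolding fond_strong_cyclic_def
  proof (intro allI impI, elim conjE)
    fix ts assume ft: "fond_pi_trajectory (T_D Q) (bool_policy \<pi>) ts" and h: "hd ts = fond_init (T_D Q)"
    obtain s0 where s0: "qnp_initial Q s0" using init_ex by blast
    have v0: "valid_state s0" using s0 by (simp add: qnp_initial_def)
    obtain ss where ss: "qnp_pi_trajectory Q \<pi> ss" "hd ss = s0" "map bstate ss = ts"
      using lift[OF assms v0 ft] h init_tr[OF s0] by metis
    obtain ss' where ss': "qnp_pi_trajectory Q \<pi> ss'" "hd ss' = last ss" "qnp_goal Q (last ss')"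
      using qsc ss s0 unfolding qnp_strong_cyclic_def by blast
    have ne: "ss \<noteq> []" "ss' \<noteq> []" using pi_ne ss(1) ss'(1) by auto
    show "\<exists>ts'. fond_pi_trajectory (T_D Q) (bool_policy \<pi>) ts' \<and> hd ts' = last ts \<and> fond_goal (T_D Q) (last ts')"
    proof (intro exI conjI)
      show "fond_pi_trajectory (T_D Q) (bool_policy \<pi>) (map bstate ss')" using proj(1)[OF assms ss'(1)] .
      show "hd (map bstate ss') = last ts" using ne ss(3) ss'(2) by (auto simp: hd_map last_map)
      show "fond_goal (T_D Q) (last (map bstate ss'))"
        using ne goal_tr[OF last_valid[OF assms ss'(1)], of Q] ss'(3) by (simp add: last_map)
    qed
  qed
next
  assume fsc: "fond_strong_cyclic (T_D Q) (bool_policy \<pi>)"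
  show "qnp_strong_cyclic Q \<pi>"
    unfolding qnp_strong_cyclic_def
  proof (intro allI impI, elim conjE)
    fix ss assume ss: "qnp_pi_trajectory Q \<pi> ss" and i: "qnp_initial Q (hd ss)"
    have ne: "ss \<noteq> []" using pi_ne ss by auto
    have ft: "fond_pi_trajectory (T_D Q) (bool_policy \<pi>) (map bstate ss)" using proj(1)[OF assms ss] .
    have "hd (map bstate ss) = fond_init (T_D Q)" using ne init_tr[OF i] by (simp add: hd_map)
    then obtain ts' where ts': "fond_pi_trajectory (T_D Q) (bool_policy \<pi>) ts'"
      "hd ts' = last (map bstate ss)" "fond_goal (T_D Q) (last ts')"
      using fsc ft unfolding fond_strong_cyclic_def by blast
    have vl: "valid_state (last ss)" using last_valid[OF assms ss] .
    obtain ss' where ss': "qnp_pi_trajectory Q \<pi> ss'" "hd ss' = last ss" "map bstate ss' = ts'"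
      using lift[OF assms vl ts'(1)] ts'(2) ne by (metis last_map)
    have ne': "ss' \<noteq> []" using pi_ne ss'(1) by auto
    show "\<exists>ss'. qnp_pi_trajectory Q \<pi> ss' \<and> hd ss' = last ss \<and> qnp_goal Q (last ss')"
    proof (intro exI conjI)
      show "qnp_pi_trajectory Q \<pi> ss'" "hd ss' = last ss" using ss' by auto
      show "qnp_goal Q (last ss')"
        using goal_tr[OF last_valid[OF assms ss'(1)], of Q] ts'(3) ss'(3)[symmetric] ne' by (simp add: last_map)
    qed
  qed
qed

end
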